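(* Fix $\delta\in(0,1)$, $\sigma>0$, $w\geq(2\pi)^{-1/2}$ and $u>0$ sufficiently large. There exists $c_\delta>0$ depending only on $\delta$ such that $\mathcal{M}(\rho,n,\sigma,w,u)\geq 1-\delta$ whenever $\rho\leq c\log\log(8n)$ and $c\in(0,c_\delta)$ (for any $n\geq 2$).
   Context: For a real random variable $Y$, $\|Y\|_{\Psi_2}=\inf\{t>0:\ \mathbb{E}\exp(Y^2/t^2)\leq 2\}$. Let $n\geq 2$. $\mathcal{P}(w,u)$ is the class of distributions of $X=(X_1,\ldots,X_n)^\top\in\mathbb{R}^n$ such that the $X_i$ are independent and mean zero, each $X_i/(\mathbb{E}X_i^2)^{1/2}$ has a density bounded above by $w$, and $\|X_i\|_{\Psi_2}^2\leq u\,\mathbb{E}X_i^2$ for all $i$. $\mathcal{P}_0(n,w,u,\sigma)=\{P\in\mathcal{P}(w,u):\ \mathrm{Cov}_P(X)=\sigma^2I_n\}$. For $\rho>0$, $\mathcal{P}(n,w,u,\rho)$ is the set of $P\in\mathcal{P}(w,u)$ under which $\mathrm{Cov}_P(X)=\mathrm{Diag}(V_1,\ldots,V_n)$ with, for some $t_0\in[n-1]$, $V_i=\sigma_1^2>0$ for $i\leq t_0$, $V_i=\sigma_2^2>0$ for $i>t_0$, and $\min(t_0,n-t_0)\big[\big(\frac{|\sigma_1^2-\sigma_2^2|}{\sigma_1^2\wedge\sigma_2^2}\big)\wedge\big(\frac{|\sigma_1^2-\sigma_2^2|}{\sigma_1^2\wedge\sigma_2^2}\big)^2\big]=\rho$.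 With $\Psi$ the class of measurable $\psi:\mathbb{R}^n\to\{0,1\}$, $$\mathcal{M}(\rho,n,\sigma,w,u)=\inf_{\psi\in\Psi}\Big\{\sup_{P\in\mathcal{P}_0(n,w,u,\sigma)}\mathbb{E}_P\psi(X)+\sup_{P\in\mathcal{P}(n,w,u,\rho)}\mathbb{E}_P(1-\psi(X))\Big\}.$$ *)

theory Defs
  imports "HOL-Probability.Probability"
begin

text \<open>The sample space R^n is modelled as functions nat => real on the index set {..<n}
  (coordinate i of X is  x i, for i < n; index i here corresponds to index i+1 of the paper).\<close>

abbreviation Rn_space :: "nat \<Rightarrow> (nat \<Rightarrow> real) measure" where
  "Rn_space n \<equiv> PiM {..<n} (\<lambda>_. borel)"

text \<open>Orlicz psi_2 norm, inf {t>0. E exp(Y^2/t^2) <= 2}, valued in ereal (infinite if the set is empty).\<close>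
definition psi2_norm :: "'a measure \<Rightarrow> ('a \<Rightarrow> real) \<Rightarrow> ereal" where
  "psi2_norm M Y = (INF t\<in>{t::real. t > 0 \<and> (\<integral>\<^sup>+ x. ennreal (exp ((Y x)^2 / t^2)) \<partial>M) \<le> 2}. ereal t)"

definition cov_entry :: "(nat \<Rightarrow> real) measure \<Rightarrow> nat \<Rightarrow> nat \<Rightarrow> real" where
  "cov_entry P i j = (\<integral>x. (x i - (\<integral>y. y i \<partial>P)) * (x j - (\<integral>y. y j \<partial>P)) \<partial>P)"

definition P_class :: "nat \<Rightarrow> real \<Rightarrow> real \<Rightarrow> (nat \<Rightarrow> real) measure set" where
  "P_class n w u = {P. prob_space P \<and> sets P = sets (Rn_space n) \<and>
     prob_space.indep_vars P (\<lambda>_. borel) (\<lambda>i x. x i) {..<n} \<and>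
     (\<forall>i<n. integrable P (\<lambda>x. x i) \<and> (\<integral>x. x i \<partial>P) = 0 \<and>
        (\<exists>f. distributed P lborel (\<lambda>x. x i / sqrt (\<integral>y. (y i)^2 \<partial>P)) f \<and> (\<forall>t. f t \<le> ennreal w)) \<and>
        (psi2_norm P (\<lambda>x. x i))^2 \<le> ereal (u * (\<integral>y. (y i)^2 \<partial>P)))}"

definition P0_class :: "nat \<Rightarrow> real \<Rightarrow> real \<Rightarrow> real \<Rightarrow> (nat \<Rightarrow> real) measure set" where
  "P0_class n w u \<sigma> = {P \<in> P_class n w u.
     \<forall>i<n. \<forall>j<n. cov_entry P i j = (if i = j then \<sigma>^2 else 0)}"

text \<open>Alternative class P(n,w,u,rho): one variance change point t0 in [n-1]
  (paper indices 1..t0 have variance s1 = sigma_1^2, indices > t0 have s2 = sigma_2^2).\<close>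
definition P1_class :: "nat \<Rightarrow> real \<Rightarrow> real \<Rightarrow> real \<Rightarrow> (nat \<Rightarrow> real) measure set" where
  "P1_class n w u \<rho> = {P \<in> P_class n w u. \<exists>t0::nat. \<exists>s1 s2::real.
     1 \<le> t0 \<and> t0 \<le> n - 1 \<and> s1 > 0 \<and> s2 > 0 \<and>
     (\<forall>i<n. \<forall>j<n. cov_entry P i j = (if i = j then (if i < t0 then s1 else s2) else 0)) \<and>
     (let r = \<bar>s1 - s2\<bar> / min s1 s2 in real (min t0 (n - t0)) * min r (r^2) = \<rho>)}"

definition tests :: "nat \<Rightarrow> ((nat \<Rightarrow> real) \<Rightarrow> real) set" where
  "tests n = {\<psi>. \<psi> \<in> borel_measurable (Rn_space n) \<and> (\<forall>x. \<psi> x \<in> {0, 1})}"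

definition minimax_risk :: "real \<Rightarrow> nat \<Rightarrow> real \<Rightarrow> real \<Rightarrow> real \<Rightarrow> ennreal" where
  "minimax_risk \<rho> n \<sigma> w u =
     (INF \<psi>\<in>tests n.
        (SUP P\<in>P0_class n w u \<sigma>. \<integral>\<^sup>+ x. ennreal (\<psi> x) \<partial>P)
      + (SUP P\<in>P1_class n w u \<rho>. \<integral>\<^sup>+ x. ennreal (1 - \<psi> x) \<partial>P))"

end

theory Submission
  imports Defs
begin

definition hh :: "real \<Rightarrow> real \<Rightarrow> real" where
  "hh a x = (if \<bar>x\<bar> \<le> a/2 then -1 else 1)"

definition pd :: "real \<Rightarrow> real \<Rightarrow> real \<Rightarrow> real" where
  "pd a r x = indicator {-a..a} x / (2*a) * (1 + r * hh a x)"

definition Mc :: "real \<Rightarrow> real \<Rightarrow> real measure" where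
  "Mc a r = density lborel (\<lambda>x. ennreal (pd a r x))"

lemma hh_sq[simp]: "hh a x * hh a x = 1"
  by (simp add: hh_def)

lemma hh_abs: "\<bar>hh a x\<bar> = 1" by (simp add: hh_def)

lemma hh_meas[measurable]: "hh a \<in> borel_measurable borel"
  unfolding hh_def by measurable

lemma pd_meas[measurable]: "pd a r \<in> borel_measurable borel"
  unfolding pd_def by measurable

lemma pd_eq:
  assumes "a > 0"
  shows "pd a r x = ((1+r) * indicator {-a..a} x - 2*r*indicator {-(a/2)..a/2} x) / (2*a)"
  using assms by (auto simp: pd_def hh_def indicator_def field_simps abs_le_iff)

lemma pd_nonneg: "a > 0 \<Longrightarrow> \<bar>r\<bar> \<le> 1 \<Longrightarrow> 0 \<le> pd a r x"
proof -
  assume a: "a > 0" "\<bar>r\<bar> \<le> 1"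
  have "\<bar>r * hh a x\<bar> \<le> 1" using a by (simp add: abs_mult hh_abs)
  then have "0 \<le> 1 + r * hh a x" by linarith
  then show ?thesis using a unfolding pd_def by (auto simp: indicator_def)
qed

lemma pd_le: "a > 0 \<Longrightarrow> \<bar>r\<bar> \<le> 1 \<Longrightarrow> pd a r x \<le> (1 + \<bar>r\<bar>) / (2*a)"
proof -
  assume a: "a > 0" "\<bar>r\<bar> \<le> 1"
  have "r * hh a x \<le> \<bar>r\<bar>" using hh_abs[of a x]
    by (metis abs_ge_self abs_mult mult.right_neutral)
  then show ?thesis using a unfolding pd_def
    by (auto simp: indicator_def divide_simps)
qed

lemma pd_zero_out: "\<bar>x\<bar> > a \<Longrightarrow> pd a r x = 0"
  by (auto simp: pd_def indicator_def)

lemma pd_r: "pd a r x = pd a 0 x * (1 + r * hh a x)"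
  by (simp add: pd_def)

lemma int_pow_sym:
  assumes "b \<ge> 0"
  shows "integrable lborel (\<lambda>x. x^k * indicator {-b..b} x :: real)"
    and "(\<integral>x. x^k * indicator {-b..b} x \<partial>lborel) = (b^Suc k - (-b)^Suc k) / Suc k"
proof -
  show "integrable lborel (\<lambda>x. x^k * indicator {-b..b} x :: real)"
    using assms by (auto intro!: borel_integrable_atLeastAtMost)
  show "(\<integral>x. x^k * indicator {-b..b} x \<partial>lborel) = (b^Suc k - (-b)^Suc k) / Suc k"
    by (rule integral_power) (use assms in simp)
qed

lemma mom:
  assumes "a > 0"
  shows "integrable lborel (\<lambda>x. x^k * pd a r x)"
    and "(\<integral>x. x^k * pd a r x \<partial>lborel) =
      (1+r)/(2*a) * ((a^Suc k - (-a)^Suc k) / Suc k) - (2*r/(2*a)) * (((a/2)^Suc k - (-(a/2))^Suc k) / Suc k)"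
proof -
  have eq: "(\<lambda>x. x^k * pd a r x) = (\<lambda>x. ((1+r)/(2*a)) * (x^k * indicator {-a..a} x)
       - (2*r/(2*a)) * (x^k * indicator {-(a/2)..a/2} x))"
    using assms by (auto simp: pd_eq field_simps)
  have a2: "a/2 \<ge> 0" using assms by simp
  show "integrable lborel (\<lambda>x. x^k * pd a r x)"
    unfolding eq using int_pow_sym(1)[of a k] int_pow_sym(1)[OF a2, of k] assms by auto
  show "(\<integral>x. x^k * pd a r x \<partial>lborel) =
      (1+r)/(2*a) * ((a^Suc k - (-a)^Suc k) / Suc k) - (2*r/(2*a)) * (((a/2)^Suc k - (-(a/2))^Suc k) / Suc k)"
    unfolding eq using int_pow_sym(1)[of a k] int_pow_sym(1)[OF a2, of k] assms
    by (simp add: int_pow_sym(2)[of a k] int_pow_sym(2)[OF a2, of k] mult.commute del: of_nat_Suc)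
qed

lemma mom0: "a > 0 \<Longrightarrow> (\<integral>x. pd a r x \<partial>lborel) = 1"
  using mom(2)[of a 0 r] by (simp add: field_simps)
lemma mom1: "a > 0 \<Longrightarrow> (\<integral>x. x * pd a r x \<partial>lborel) = 0"
  using mom(2)[of a 1 r] by (simp add: field_simps)
lemma mom2: "a > 0 \<Longrightarrow> (\<integral>x. x^2 * pd a r x \<partial>lborel) = a^2 * (1/3 + r/4)"
proof -
  assume a: "a > 0"
  have "(\<integral>x. x^2 * pd a r x \<partial>lborel) * a = (a^2 * (1/3 + r/4)) * a"
    using mom(2)[of a 2 r] a by (simp add: field_simps power3_eq_cube power2_eq_square)
  then show ?thesis using a by (subst (asm) mult_right_cancel) auto
qed
lemma int0: "a > 0 \<Longrightarrow> integrable lborel (pd a r)"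
  using mom(1)[of a 0 r] by simp
lemma int1: "a > 0 \<Longrightarrow> integrable lborel (\<lambda>x. x * pd a r x)"
  using mom(1)[of a 1 r] by simp


lemma sets_Mc[simp, measurable_cong]: "sets (Mc a r) = sets borel"
  by (simp add: Mc_def)

lemma space_Mc[simp]: "space (Mc a r) = UNIV"
  by (simp add: Mc_def)

lemma prob_Mc: assumes "a > 0" "\<bar>r\<bar> \<le> 1" shows "prob_space (Mc a r)"
proof
  have "emeasure (Mc a r) (space (Mc a r)) = (\<integral>\<^sup>+x. ennreal (pd a r x) \<partial>lborel)"
    by (simp add: Mc_def emeasure_density)
  also have "\<dots> = ennreal (\<integral>x. pd a r x \<partial>lborel)"
    using assms by (intro nn_integral_eq_integral int0) (auto simp: pd_nonneg)
  also have "\<dots> = 1" using assms by (simp add: mom0)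
  finally show "emeasure (Mc a r) (space (Mc a r)) = 1" .
qed

lemma integral_Mc:
  assumes "a > 0" "\<bar>r\<bar> \<le> 1" "f \<in> borel_measurable borel"
  shows "(\<integral>x. f x \<partial>Mc a r) = (\<integral>x. pd a r x * f x \<partial>lborel)"
  unfolding Mc_def using assms by (subst integral_density) (auto simp: pd_nonneg)

lemma integrable_Mc:
  assumes "a > 0" "\<bar>r\<bar> \<le> 1" "f \<in> borel_measurable borel"
  shows "integrable (Mc a r) f \<longleftrightarrow> integrable lborel (\<lambda>x. pd a r x * f x)"
  unfolding Mc_def using assms by (subst integrable_density) (auto simp: pd_nonneg)

lemma Mc_mean: "a > 0 \<Longrightarrow> \<bar>r\<bar> \<le> 1 \<Longrightarrow> (\<integral>x. x \<partial>Mc a r) = 0"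
  by (subst integral_Mc) (auto simp: mom1 mult.commute)

lemma Mc_int1: "a > 0 \<Longrightarrow> \<bar>r\<bar> \<le> 1 \<Longrightarrow> integrable (Mc a r) (\<lambda>x. x)"
  by (subst integrable_Mc) (auto simp: int1 mult.commute)

lemma Mc_sq: "a > 0 \<Longrightarrow> \<bar>r\<bar> \<le> 1 \<Longrightarrow> (\<integral>x. x^2 \<partial>Mc a r) = a^2 * (1/3 + r/4)"
  using mom2[of a r] by (subst integral_Mc) (auto simp: mult.commute)

lemma Mc_int2: "a > 0 \<Longrightarrow> \<bar>r\<bar> \<le> 1 \<Longrightarrow> integrable (Mc a r) (\<lambda>x. x^2)"
  using mom(1)[of a 2 r] by (subst integrable_Mc) (auto simp: mult.commute)

lemma pd_hh: "pd a 0 x * hh a x = pd a 1 x - pd a 0 x"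
  by (simp add: pd_def algebra_simps add_divide_distrib)

lemma Mc_cross:
  assumes "a > 0"
  shows "(\<integral>x. (1 + \<alpha> * hh a x) * (1 + \<beta> * hh a x) \<partial>Mc a 0) = 1 + \<alpha> * \<beta>"
proof -
  have eq: "(\<lambda>x. pd a 0 x * ((1 + \<alpha> * hh a x) * (1 + \<beta> * hh a x))) =
     (\<lambda>x. (1 + \<alpha>*\<beta> - (\<alpha>+\<beta>)) * pd a 0 x + (\<alpha>+\<beta>) * pd a 1 x)"
  proof
    fix x
    have "pd a 0 x * ((1 + \<alpha> * hh a x) * (1 + \<beta> * hh a x)) =
       pd a 0 x * (1 + \<alpha>*\<beta> * (hh a x * hh a x)) + (\<alpha>+\<beta>) * (pd a 0 x * hh a x)"
      by (simp add: algebra_simps)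
    also have "\<dots> = (1 + \<alpha>*\<beta> - (\<alpha>+\<beta>)) * pd a 0 x + (\<alpha>+\<beta>) * pd a 1 x"
      by (simp only: hh_sq pd_hh) (simp add: algebra_simps)
    finally show "pd a 0 x * ((1 + \<alpha> * hh a x) * (1 + \<beta> * hh a x)) =
     (1 + \<alpha>*\<beta> - (\<alpha>+\<beta>)) * pd a 0 x + (\<alpha>+\<beta>) * pd a 1 x" .
  qed
  show ?thesis
    using assms by (subst integral_Mc) (auto simp: eq int0 mom0)
qed

lemma Mc_cross_int:
  assumes "a > 0"
  shows "integrable (Mc a 0) (\<lambda>x. (1 + \<alpha> * hh a x) * (1 + \<beta> * hh a x))"
proof -
  interpret prob_space "Mc a 0" using assms by (simp add: prob_Mc)
  show ?thesis
  proof (rule integrable_const_bound[where B="(1+\<bar>\<alpha>\<bar>)*(1+\<bar>\<beta>\<bar>)"])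
    show "AE x in Mc a 0. norm ((1 + \<alpha> * hh a x) * (1 + \<beta> * hh a x)) \<le> (1+\<bar>\<alpha>\<bar>)*(1+\<bar>\<beta>\<bar>)"
    proof (intro AE_I2)
      fix x
      have "\<bar>1 + \<alpha> * hh a x\<bar> \<le> 1+\<bar>\<alpha>\<bar>" "\<bar>1 + \<beta> * hh a x\<bar> \<le> 1+\<bar>\<beta>\<bar>"
        using hh_abs[of a x] by (auto simp: abs_mult intro!: order_trans[OF abs_triangle_ineq])
      then show "norm ((1 + \<alpha> * hh a x) * (1 + \<beta> * hh a x)) \<le> (1+\<bar>\<alpha>\<bar>)*(1+\<bar>\<beta>\<bar>)"
        by (simp add: abs_mult mult_mono')
    qed
  qed simp
qed

lemma Mc_density:
  assumes "a > 0" "\<bar>r\<bar> \<le> 1"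
  shows "Mc a r = density (Mc a 0) (\<lambda>x. ennreal (1 + r * hh a x))"
proof -
  have "\<bar>r * hh a x\<bar> \<le> 1" for x using assms by (simp add: abs_mult hh_abs)
  then have nn: "0 \<le> 1 + r * hh a x" for x by (smt (verit))
  have "density (Mc a 0) (\<lambda>x. ennreal (1 + r * hh a x)) =
        density lborel (\<lambda>x. ennreal (pd a 0 x) * ennreal (1 + r * hh a x))"
    unfolding Mc_def by (subst density_density_eq) auto
  also have "\<dots> = Mc a r"
    unfolding Mc_def using assms nn
    by (intro density_cong) (auto simp: ennreal_mult'[symmetric] pd_nonneg pd_r[of a r])
  finally show ?thesis by simp
qed

definition QQ :: "nat \<Rightarrow> real \<Rightarrow> (nat \<Rightarrow> real) \<Rightarrow> (nat \<Rightarrow> real) measure" where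
  "QQ n a rv = PiM {..<n} (\<lambda>i. Mc a (rv i))"

definition LL :: "nat \<Rightarrow> real \<Rightarrow> (nat \<Rightarrow> real) \<Rightarrow> (nat \<Rightarrow> real) \<Rightarrow> real" where
  "LL n a rv x = (\<Prod>i<n. 1 + rv i * hh a (x i))"

lemma sets_QQ[measurable_cong]: "sets (QQ n a rv) = sets (Rn_space n)"
  unfolding QQ_def by (intro sets_PiM_cong) auto

lemma space_QQ: "space (QQ n a rv) = space (Rn_space n)"
  unfolding QQ_def by (simp add: space_PiM)

lemma prob_QQ:
  assumes "a > 0" "\<forall>i. \<bar>rv i\<bar> \<le> 1"
  shows "prob_space (QQ n a rv)"
  unfolding QQ_def using assms by (intro prob_space_PiM) (auto simp: prob_Mc)

lemma LL_meas[measurable]: "LL n a rv \<in> borel_measurable (Rn_space n)"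
  unfolding LL_def by measurable

lemma LL_nonneg: "\<forall>i. \<bar>rv i\<bar> \<le> 1 \<Longrightarrow> 0 \<le> LL n a rv x"
  unfolding LL_def
proof (intro prod_nonneg)
  fix i assume "\<forall>i. \<bar>rv i\<bar> \<le> 1"
  then have "\<bar>rv i * hh a (x i)\<bar> \<le> 1" by (simp add: abs_mult hh_abs)
  then show "0 \<le> 1 + rv i * hh a (x i)" by linarith
qed

lemma LL_bound: "\<forall>i. \<bar>rv i\<bar> \<le> 1 \<Longrightarrow> \<bar>LL n a rv x\<bar> \<le> 2^n"
  unfolding LL_def abs_prod
proof -
  assume "\<forall>i. \<bar>rv i\<bar> \<le> 1"
  then have "\<bar>1 + rv i * hh a (x i)\<bar> \<le> 2" for i
  proof -
    assume "\<forall>i. \<bar>rv i\<bar> \<le> 1"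
    then have "\<bar>rv i * hh a (x i)\<bar> \<le> 1" by (simp add: abs_mult hh_abs)
    then show ?thesis by linarith
  qed
  then have "(\<Prod>i<n. \<bar>1 + rv i * hh a (x i)\<bar>) \<le> (\<Prod>i<n. 2)"
    by (intro prod_mono) auto
  then show "(\<Prod>i<n. \<bar>1 + rv i * hh a (x i)\<bar>) \<le> 2^n" by simp
qed

lemma indicator_PiE_prod:
  assumes "x \<in> extensional I" "finite I"
  shows "indicator (Pi\<^sub>E I A) x = (\<Prod>i\<in>I. indicator (A i) (x i) :: ennreal)"
proof (cases "x \<in> Pi\<^sub>E I A")
  case True then show ?thesis by (auto simp: indicator_def PiE_iff)
next
  case False
  then obtain i where "i \<in> I" "x i \<notin> A i" using assms by (auto simp: PiE_iff)
  then have "(\<Prod>i\<in>I. indicator (A i) (x i) :: ennreal) = 0"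
    using assms(2) by (intro prod_zero) (auto simp: indicator_def)
  then show ?thesis using False by simp
qed

lemma QQ_density:
  assumes a: "a > 0" and rv: "\<forall>i. \<bar>rv i\<bar> \<le> 1"
  shows "QQ n a rv = density (QQ n a (\<lambda>_. 0)) (\<lambda>x. ennreal (LL n a rv x))"
proof -
  interpret P: product_sigma_finite "\<lambda>i. Mc a (rv i)"
    unfolding product_sigma_finite_def using assms
    by (auto intro!: prob_space_imp_sigma_finite prob_Mc)
  interpret P0: product_sigma_finite "\<lambda>i. Mc a 0"
    unfolding product_sigma_finite_def using assms
    by (auto intro!: prob_space_imp_sigma_finite prob_Mc)
  have "density (QQ n a (\<lambda>_. 0)) (\<lambda>x. ennreal (LL n a rv x)) = PiM {..<n} (\<lambda>i. Mc a (rv i))"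
  proof (rule P.PiM_eqI)
    show "sets (density (QQ n a (\<lambda>_. 0)) (\<lambda>x. ennreal (LL n a rv x))) = sets (PiM {..<n} (\<lambda>i. Mc a (rv i)))"
      unfolding sets_density QQ_def by (intro sets_PiM_cong) auto
  next
    fix A assume A: "\<And>i. i \<in> {..<n} \<Longrightarrow> A i \<in> sets (Mc a (rv i))"
    have Asets: "A i \<in> sets borel" if "i < n" for i using A[of i] that by simp
    have PE: "Pi\<^sub>E {..<n} A \<in> sets (QQ n a (\<lambda>_. 0))"
      unfolding QQ_def using Asets by (intro sets_PiM_I_finite) auto
    have "emeasure (density (QQ n a (\<lambda>_. 0)) (\<lambda>x. ennreal (LL n a rv x))) (Pi\<^sub>E {..<n} A)
       = (\<integral>\<^sup>+x. ennreal (LL n a rv x) * indicator (Pi\<^sub>E {..<n} A) x \<partial>QQ n a (\<lambda>_. 0))"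
      using PE by (subst emeasure_density) (auto simp: sets_QQ)
    also have "\<dots> = (\<integral>\<^sup>+x. (\<Prod>i<n. ennreal (1 + rv i * hh a (x i)) * indicator (A i) (x i)) \<partial>QQ n a (\<lambda>_. 0))"
    proof (intro nn_integral_cong)
      fix x assume "x \<in> space (QQ n a (\<lambda>_. 0))"
      then have ext: "x \<in> extensional {..<n}" by (auto simp: space_QQ space_PiM PiE_def)
      have nn: "\<And>i. 0 \<le> 1 + rv i * hh a (x i)"
      proof -
        fix i
        have "\<bar>rv i * hh a (x i)\<bar> \<le> 1" using rv by (simp add: abs_mult hh_abs)
        then show "0 \<le> 1 + rv i * hh a (x i)" by linarith
      qed
      show "ennreal (LL n a rv x) * indicator (Pi\<^sub>E {..<n} A) x =
         (\<Prod>i<n. ennreal (1 + rv i * hh a (x i)) * indicator (A i) (x i))"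
        unfolding LL_def indicator_PiE_prod[OF ext finite_lessThan] prod.distrib
        using nn by (simp add: prod_ennreal)
    qed
    also have "\<dots> = (\<Prod>i<n. \<integral>\<^sup>+y. ennreal (1 + rv i * hh a y) * indicator (A i) y \<partial>Mc a 0)"
      unfolding QQ_def using Asets by (intro P0.product_nn_integral_prod) auto
    also have "\<dots> = (\<Prod>i<n. emeasure (Mc a (rv i)) (A i))"
    proof (intro prod.cong refl)
      fix i assume "i \<in> {..<n}"
      then show "(\<integral>\<^sup>+y. ennreal (1 + rv i * hh a y) * indicator (A i) y \<partial>Mc a 0) = emeasure (Mc a (rv i)) (A i)"
        using Asets[of i] Mc_density[OF a, of "rv i"] rv
        by (simp add: emeasure_density)
    qed
    finally show "emeasure (density (QQ n a (\<lambda>_. 0)) (\<lambda>x. ennreal (LL n a rv x))) (Pi\<^sub>E {..<n} A)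
      = (\<Prod>i<n. emeasure (Mc a (rv i)) (A i))" .
  qed simp
  then show ?thesis by (simp add: QQ_def)
qed

lemma LL_cross:
  assumes a: "a > 0"
  shows "(\<integral>x. LL n a rv x * LL n a sv x \<partial>QQ n a (\<lambda>_. 0)) = (\<Prod>i<n. 1 + rv i * sv i)"
    and "integrable (QQ n a (\<lambda>_. 0)) (\<lambda>x. LL n a rv x * LL n a sv x)"
proof -
  interpret P0: product_sigma_finite "\<lambda>i. Mc a 0"
    unfolding product_sigma_finite_def using assms
    by (auto intro!: prob_space_imp_sigma_finite prob_Mc)
  have eq: "(\<lambda>x. LL n a rv x * LL n a sv x) = (\<lambda>x. \<Prod>i<n. (\<lambda>i y. (1 + rv i * hh a y) * (1 + sv i * hh a y)) i (x i))"
    by (simp add: LL_def prod.distrib)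
  show "(\<integral>x. LL n a rv x * LL n a sv x \<partial>QQ n a (\<lambda>_. 0)) = (\<Prod>i<n. 1 + rv i * sv i)"
    unfolding eq QQ_def using a
    by (subst P0.product_integral_prod) (auto simp: Mc_cross Mc_cross_int)
  show "integrable (QQ n a (\<lambda>_. 0)) (\<lambda>x. LL n a rv x * LL n a sv x)"
    unfolding eq QQ_def using a
    by (intro P0.product_integrable_prod) (auto simp: Mc_cross_int)
qed

lemma fmeas: "f \<in> borel_measurable borel \<Longrightarrow> f \<in> borel_measurable (Mc a r)"
  by (subst measurable_cong_sets[OF sets_Mc refl])

lemma scale_distr:
  assumes a: "a > 0" and r: "\<bar>r\<bar> \<le> 1" and c: "c > 0"
  shows "distr (Mc a r) lborel (\<lambda>y. y / c) = density lborel (\<lambda>y. ennreal (c * pd a r (c*y)))"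
proof (rule measure_eqI)
  show "sets (distr (Mc a r) lborel (\<lambda>y. y / c)) = sets (density lborel (\<lambda>y. ennreal (c * pd a r (c*y))))"
    by simp
next
  fix A assume "A \<in> sets (distr (Mc a r) lborel (\<lambda>y. y / c))"
  then have A[measurable]: "A \<in> sets borel" by simp
  have m1: "(\<lambda>y. y / c) \<in> measurable (Mc a r) lborel"
    by (subst measurable_cong_sets[OF sets_Mc refl]) simp
  have "emeasure (distr (Mc a r) lborel (\<lambda>y. y / c)) A = emeasure (Mc a r) ((\<lambda>y. y / c) -` A \<inter> space (Mc a r))"
    by (rule emeasure_distr[OF m1]) simp
  also have "\<dots> = (\<integral>\<^sup>+x. ennreal (pd a r x) * indicator ((\<lambda>y. y / c) -` A) x \<partial>lborel)"
  proof -
    have "(\<lambda>y. y / c) -` A \<inter> space borel \<in> sets borel"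
      by (rule measurable_sets[OF _ A]) simp
    then show ?thesis unfolding Mc_def by (subst emeasure_density) auto
  qed
  also have "\<dots> = (\<integral>\<^sup>+x. ennreal (pd a r x) * indicator A (x / c) \<partial>lborel)"
    by (simp add: indicator_def)
  also have "\<dots> = ennreal \<bar>c\<bar> * (\<integral>\<^sup>+y. ennreal (pd a r (0 + c * y)) * indicator A ((0 + c * y) / c) \<partial>lborel)"
    using c by (intro nn_integral_real_affine) auto
  also have "\<dots> = (\<integral>\<^sup>+y. ennreal c * (ennreal (pd a r (c * y)) * indicator A y) \<partial>lborel)"
    using c by (subst nn_integral_cmult) auto
  also have "\<dots> = (\<integral>\<^sup>+y. ennreal (c * pd a r (c*y)) * indicator A y \<partial>lborel)"
    using c by (intro nn_integral_cong) (simp add: ennreal_mult' mult.assoc)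
  also have "\<dots> = emeasure (density lborel (\<lambda>y. ennreal (c * pd a r (c*y)))) A"
    by (subst emeasure_density) auto
  finally show "emeasure (distr (Mc a r) lborel (\<lambda>y. y / c)) A = emeasure (density lborel (\<lambda>y. ennreal (c * pd a r (c*y)))) A" .
qed

locale QL =
  fixes n :: nat and a :: real and rv :: "nat \<Rightarrow> real"
  assumes a_pos: "a > 0" and rv_bd: "\<forall>i. \<bar>rv i\<bar> \<le> 1"
begin

abbreviation "Q \<equiv> QQ n a rv"

lemma prob: "prob_space Q" using prob_QQ a_pos rv_bd by blast

lemma comp_meas: "i < n \<Longrightarrow> (\<lambda>x. x i) \<in> measurable Q (Mc a (rv i))"
  unfolding QQ_def by (rule measurable_component_singleton) simp

lemma comp_meas_borel: "i < n \<Longrightarrow> (\<lambda>x. x i) \<in> borel_measurable Q"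
proof -
  assume "i < n"
  from comp_meas[OF this] show ?thesis
    by (subst (asm) measurable_cong_sets[OF refl sets_Mc]) 
qed

lemma comp: "i < n \<Longrightarrow> distr Q (Mc a (rv i)) (\<lambda>x. x i) = Mc a (rv i)"
  unfolding QQ_def using a_pos rv_bd by (intro distr_PiM_component) (auto simp: prob_Mc)


lemma intg: fixes f :: "real \<Rightarrow> real" shows "i < n \<Longrightarrow> f \<in> borel_measurable borel \<Longrightarrow> (\<integral>x. f (x i) \<partial>Q) = (\<integral>y. f y \<partial>Mc a (rv i))"
proof -
  assume i: "i < n" and f: "f \<in> borel_measurable borel"
  have "integral\<^sup>L (distr Q (Mc a (rv i)) (\<lambda>x. x i)) f = (\<integral>x. f (x i) \<partial>Q)"
    by (rule integral_distr[OF comp_meas[OF i] fmeas[OF f]])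
  then show ?thesis unfolding comp[OF i] by simp
qed

lemma integr: fixes f :: "real \<Rightarrow> real" shows "i < n \<Longrightarrow> f \<in> borel_measurable borel \<Longrightarrow> integrable (Mc a (rv i)) f \<Longrightarrow> integrable Q (\<lambda>x. f (x i))"
proof -
  assume i: "i < n" and f: "f \<in> borel_measurable borel" and int: "integrable (Mc a (rv i)) f"
  have "integrable (distr Q (Mc a (rv i)) (\<lambda>x. x i)) f \<longleftrightarrow> integrable Q (\<lambda>x. f (x i))"
    by (rule integrable_distr_eq[OF comp_meas[OF i] fmeas[OF f]])
  then show ?thesis unfolding comp[OF i] using int by simp
qed

lemma nnintg: "i < n \<Longrightarrow> f \<in> borel_measurable borel \<Longrightarrow> (\<integral>\<^sup>+x. f (x i) \<partial>Q) = (\<integral>\<^sup>+y. f y \<partial>Mc a (rv i))"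
proof -
  assume i: "i < n" and f: "f \<in> borel_measurable borel"
  have "integral\<^sup>N (distr Q (Mc a (rv i)) (\<lambda>x. x i)) f = (\<integral>\<^sup>+x. f (x i) \<partial>Q)"
    by (rule nn_integral_distr[OF comp_meas[OF i]]) (subst measurable_cong_sets[OF sets_distr refl], rule fmeas[OF f])
  then show ?thesis unfolding comp[OF i] by simp
qed

lemma rvi: "\<bar>rv i\<bar> \<le> 1" using rv_bd by blast

lemma mean0: "i < n \<Longrightarrow> (\<integral>x. x i \<partial>Q) = 0"
proof -
  assume i: "i < n"
  have "(\<integral>x. x i \<partial>Q) = (\<integral>y. y \<partial>Mc a (rv i))" by (rule intg[OF i]) simp
  also have "\<dots> = 0" by (rule Mc_mean[OF a_pos rvi])
  finally show ?thesis .
qed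

lemma int_i: "i < n \<Longrightarrow> integrable Q (\<lambda>x. x i)"
proof -
  assume i: "i < n"
  have m: "(\<lambda>x. x) \<in> borel_measurable (borel :: real measure)" by simp
  show ?thesis using integr[OF i m Mc_int1[OF a_pos rvi]] by simp
qed

lemma sq_i: "i < n \<Longrightarrow> (\<integral>x. (x i)^2 \<partial>Q) = a^2 * (1/3 + rv i / 4)"
proof -
  assume i: "i < n"
  have "(\<integral>x. (x i)^2 \<partial>Q) = (\<integral>y. y^2 \<partial>Mc a (rv i))" by (rule intg[OF i]) simp
  also have "\<dots> = a^2 * (1/3 + rv i / 4)" by (rule Mc_sq[OF a_pos rvi])
  finally show ?thesis .
qed

lemma indep: "n > 0 \<Longrightarrow> prob_space.indep_vars Q (\<lambda>_. borel) (\<lambda>i x. x i) {..<n}"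
proof -
  assume n: "n > 0"
  interpret prob_space Q by (rule prob)
  show ?thesis
  proof (subst indep_vars_iff_distr_eq_PiM')
    show "{..<n} \<noteq> {}" using n by auto
    show "random_variable borel (\<lambda>x. x i)" if "i \<in> {..<n}" for i
      using comp_meas_borel that by simp
    have "distr Q (Pi\<^sub>M {..<n} (\<lambda>i. borel)) (\<lambda>x. restrict x {..<n}) = distr Q Q (\<lambda>x. x)"
      by (intro distr_cong) (auto simp: sets_QQ space_QQ space_PiM)
    also have "\<dots> = Q" by (simp add: distr_id2)
    also have "\<dots> = Pi\<^sub>M {..<n} (\<lambda>i. distr Q borel (\<lambda>x. x i))"
      unfolding QQ_def
    proof (intro PiM_cong refl)
      fix i assume "i \<in> {..<n}"
      then have "distr Q borel (\<lambda>x. x i) = distr Q (Mc a (rv i)) (\<lambda>x. x i)"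
        by (intro distr_cong) auto
      then show "Mc a (rv i) = distr (Pi\<^sub>M {..<n} (\<lambda>i. Mc a (rv i))) borel (\<lambda>x. x i)"
        using comp[of i] \<open>i \<in> {..<n}\<close> by (simp add: QQ_def)
    qed
    finally show "distr Q (Pi\<^sub>M {..<n} (\<lambda>i. borel)) (\<lambda>x. restrict x {..<n}) =
      Pi\<^sub>M {..<n} (\<lambda>i. distr Q borel (\<lambda>x. x i))" .
  qed
qed

lemma cov: "n > 0 \<Longrightarrow> i < n \<Longrightarrow> j < n \<Longrightarrow>
   cov_entry Q i j = (if i = j then a^2 * (1/3 + rv i / 4) else 0)"
proof -
  assume n: "n > 0" and ij: "i < n" "j < n"
  interpret prob_space Q by (rule prob)
  have "cov_entry Q i j = (\<integral>x. x i * x j \<partial>Q)"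
    unfolding cov_entry_def using ij by (simp add: mean0)
  also have "\<dots> = (if i = j then a^2 * (1/3 + rv i / 4) else 0)"
  proof (cases "i = j")
    case True then show ?thesis using sq_i[of i] ij by (simp add: power2_eq_square)
  next
    case False
    have ind: "indep_vars (\<lambda>_. borel) (\<lambda>i x. x i) {i, j}"
      using ij by (intro indep_vars_subset[OF indep[OF n]]) auto
    have "(\<integral>x. (\<Prod>k\<in>{i,j}. x k) \<partial>Q) = (\<Prod>k\<in>{i,j}. \<integral>x. x k \<partial>Q)"
      using ij by (intro indep_vars_lebesgue_integral[OF _ ind]) (auto intro: int_i)
    then show ?thesis using False ij by (simp add: mean0)
  qed
  finally show ?thesis .
qed


lemma dens: "i < n \<Longrightarrow> c > 0 \<Longrightarrow>
  distributed Q lborel (\<lambda>x. x i / c) (\<lambda>y. ennreal (c * pd a (rv i) (c*y)))"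
proof -
  assume i: "i < n" and c: "c > 0"
  have m1: "(\<lambda>y. y / c) \<in> measurable (Mc a (rv i)) lborel"
    by (subst measurable_cong_sets[OF sets_Mc refl]) simp
  have "distr Q lborel (\<lambda>x. x i / c) = distr (distr Q (Mc a (rv i)) (\<lambda>x. x i)) lborel (\<lambda>y. y / c)"
    by (subst distr_distr[OF m1 comp_meas[OF i]]) (simp add: comp_def)
  also have "\<dots> = density lborel (\<lambda>y. ennreal (c * pd a (rv i) (c*y)))"
    unfolding comp[OF i] by (rule scale_distr[OF a_pos rvi c])
  finally show ?thesis unfolding distributed_def
    using comp_meas_borel[OF i] by (auto simp: measurable_cong_sets[OF sets_QQ refl])
qed

lemma psi2: "i < n \<Longrightarrow> psi2_norm Q (\<lambda>x. x i) \<le> ereal (a / sqrt (ln 2))"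
proof -
  assume i: "i < n"
  define t0 where "t0 = a / sqrt (ln 2)"
  have t0: "t0 > 0" using a_pos by (simp add: t0_def)
  have t0sq: "t0^2 = a^2 / ln 2" by (simp add: t0_def power_divide)
  have pt: "ennreal (pd a (rv i) y) * ennreal (exp (y^2 / t0^2)) \<le> ennreal (pd a (rv i) y) * 2" for y
  proof (cases "\<bar>y\<bar> \<le> a")
    case True
    have "\<bar>y\<bar>^2 \<le> a^2" using True by (intro power_mono) auto
    then have "y^2 \<le> a^2" by simp
    then have "y^2 / t0^2 \<le> ln 2" unfolding t0sq using a_pos
      by (simp add: field_simps mult_left_mono)
    then have "exp (y^2 / t0^2) \<le> 2"
      by (metis exp_le_cancel_iff exp_ln zero_less_numeral)
    then show ?thesis by (intro mult_left_mono) (auto simp: ennreal_le_iff[symmetric])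
  next
    case False then show ?thesis by (simp add: pd_zero_out)
  qed
  have "(\<integral>\<^sup>+x. ennreal (exp ((x i)^2 / t0^2)) \<partial>Q) = (\<integral>\<^sup>+y. ennreal (exp (y^2 / t0^2)) \<partial>Mc a (rv i))"
    by (rule nnintg[OF i]) simp
  also have "\<dots> = (\<integral>\<^sup>+y. ennreal (pd a (rv i) y) * ennreal (exp (y^2 / t0^2)) \<partial>lborel)"
    unfolding Mc_def by (subst nn_integral_density) auto
  also have "\<dots> \<le> (\<integral>\<^sup>+y. ennreal (pd a (rv i) y) * 2 \<partial>lborel)"
    by (intro nn_integral_mono pt)
  also have "\<dots> = 2 * (\<integral>\<^sup>+y. ennreal (pd a (rv i) y) \<partial>lborel)"
    by (subst nn_integral_multc) (auto simp: mult.commute)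
  also have "(\<integral>\<^sup>+y. ennreal (pd a (rv i) y) \<partial>lborel) = 1"
    using prob_space.emeasure_space_1[OF prob_Mc[OF a_pos rvi]]
    by (simp add: Mc_def emeasure_density)
  finally have "(\<integral>\<^sup>+x. ennreal (exp ((x i)^2 / t0^2)) \<partial>Q) \<le> 2" by simp
  then show ?thesis unfolding psi2_norm_def t0_def[symmetric]
    using t0 by (intro INF_lower2[of t0]) auto
qed

lemma psi2_sq: "i < n \<Longrightarrow> (psi2_norm Q (\<lambda>x. x i))^2 \<le> ereal (a^2 / ln 2)"
proof -
  assume i: "i < n"
  have ge: "0 \<le> psi2_norm Q (\<lambda>x. x i)"
    unfolding psi2_norm_def by (rule INF_greatest) auto
  have le: "psi2_norm Q (\<lambda>x. x i) \<le> ereal (a / sqrt (ln 2))" by (rule psi2[OF i])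
  obtain v where v: "psi2_norm Q (\<lambda>x. x i) = ereal v" using ge le
    by (cases "psi2_norm Q (\<lambda>x. x i)") auto
  have "0 \<le> v" "v \<le> a / sqrt (ln 2)" using ge le v by auto
  then have "v^2 \<le> (a / sqrt (ln 2))^2" by (intro power_mono) auto
  also have "\<dots> = a^2 / ln 2" by (simp add: power_divide)
  finally show ?thesis using v by simp
qed


lemma inP:
  assumes n: "n > 0" and r: "\<forall>i. 0 \<le> rv i \<and> rv i \<le> 1/12"
    and w: "w \<ge> 1 / sqrt (2 * pi)" and u: "u \<ge> 3 / ln 2"
  shows "Q \<in> P_class n w u"
  unfolding P_class_def
proof (intro CollectI conjI allI impI)
  show "prob_space Q" by (rule prob)
  show "sets Q = sets (Rn_space n)" by (rule sets_QQ)
  show "prob_space.indep_vars Q (\<lambda>_. borel) (\<lambda>i x. x i) {..<n}" by (rule indep[OF n])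
  fix i assume i: "i < n"
  show "integrable Q (\<lambda>x. x i)" by (rule int_i[OF i])
  show "(\<integral>x. x i \<partial>Q) = 0" by (rule mean0[OF i])
  define X where "X = 1/3 + rv i / 4"
  have X: "X > 0" "X \<le> 17/48" using r unfolding X_def by (auto dest: spec[of _ i])
  define c where "c = sqrt (\<integral>y. (y i)^2 \<partial>Q)"
  have c: "c = a * sqrt X" unfolding c_def sq_i[OF i] X_def[symmetric] using a_pos
    by (simp add: real_sqrt_mult)
  have cpos: "c > 0" using c a_pos X by simp
  have r1: "0 \<le> rv i" "rv i \<le> 1/12" using r by auto
  have bnd: "sqrt X * (1 + rv i) / 2 \<le> 1 / sqrt (2 * pi)"
  proof -
    have "sqrt X * (1 + rv i) / 2 = sqrt (X * (1 + rv i)^2 / 4)"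
      using r1 by (simp add: real_sqrt_mult real_sqrt_divide)
    also have "\<dots> \<le> sqrt (1 / (2 * pi))"
    proof (intro real_sqrt_le_mono)
      have "(1 + rv i)^2 \<le> (13/12)^2" using r1 by (intro power_mono) auto
      then have "X * (1 + rv i)^2 \<le> 17/48 * (13/12)^2" using X
        by (intro mult_mono) auto
      also have "\<dots> < 2 / 4" by (simp add: power2_eq_square)
      also have "\<dots> < 2 / pi" using pi_less_4 pi_gt3 by (intro divide_strict_left_mono) auto
      finally show "X * (1 + rv i)^2 / 4 \<le> 1 / (2 * pi)" using pi_gt3 by (simp add: field_simps)
    qed
    also have "\<dots> = 1 / sqrt (2 * pi)" by (simp add: real_sqrt_divide)
    finally show ?thesis .
  qed
  show "\<exists>f. distributed Q lborel (\<lambda>x. x i / sqrt (\<integral>y. (y i)^2 \<partial>Q)) f \<and> (\<forall>t. f t \<le> ennreal w)"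
  proof (intro exI conjI allI)
    show "distributed Q lborel (\<lambda>x. x i / sqrt (\<integral>y. (y i)^2 \<partial>Q)) (\<lambda>y. ennreal (c * pd a (rv i) (c*y)))"
      using dens[OF i cpos] unfolding c_def .
    fix t
    have "c * pd a (rv i) (c*t) \<le> c * ((1 + \<bar>rv i\<bar>) / (2*a))"
      using cpos by (intro mult_left_mono pd_le a_pos rvi) auto
    also have "\<dots> = sqrt X * (1 + rv i) / 2" using c r1 a_pos by simp
    also have "\<dots> \<le> w" using bnd w by linarith
    finally show "ennreal (c * pd a (rv i) (c*t)) \<le> ennreal w" by (rule ennreal_leI)
  qed
  have "(psi2_norm Q (\<lambda>x. x i))^2 \<le> ereal (a^2 / ln 2)" by (rule psi2_sq[OF i])
  also have "a^2 / ln 2 \<le> u * (\<integral>y. (y i)^2 \<partial>Q)"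
  proof -
    have "a^2 / ln 2 = (3 / ln 2) * (a^2 * (1/3))" by simp
    also have "\<dots> \<le> u * (a^2 * X)"
    proof -
      have "0 \<le> 3 / ln (2::real)" by simp
      then have "0 \<le> u" using u by linarith
      then show ?thesis using u X a_pos r1 by (intro mult_mono) (auto simp: X_def)
    qed
    finally show ?thesis unfolding sq_i[OF i] X_def .
  qed
  then have "ereal (a^2 / ln 2) \<le> ereal (u * (\<integral>y. (y i)^2 \<partial>Q))" by simp
  finally show "(psi2_norm Q (\<lambda>x. x i))^2 \<le> ereal (u * (\<integral>y. (y i)^2 \<partial>Q))" .
qed

end

lemma avg_le_some:
  fixes f :: "nat \<Rightarrow> real"
  assumes "K > 0"
  shows "\<exists>k<K. (\<Sum>j<K. f j) / K \<le> f k"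
proof (rule ccontr)
  assume "\<not> ?thesis"
  then have "\<forall>k<K. f k < (\<Sum>j<K. f j) / K" by auto
  then have "(\<Sum>k<K. f k) < (\<Sum>k<K. (\<Sum>j<K. f j) / K)"
    using assms by (intro sum_strict_mono) auto
  also have "\<dots> = (\<Sum>j<K. f j)" using assms by simp
  finally show False by simp
qed

lemma pointwise_lecam:
  fixes p y e :: real
  assumes "p \<in> {0,1}" "e > 0" "0 \<le> y"
  shows "1 - e/2 - (1 - y)^2 / (2*e) \<le> p + (1 - p) * y"
proof -
  have "(1 - y)^2 / (2*e) \<ge> 0" using assms by simp
  moreover have "1 - e/2 - (1 - y)^2 / (2*e) \<le> y"
  proof -
    have "0 \<le> ((1 - y) - e)^2 / (2*e)" using assms by simp
    also have "((1 - y) - e)^2 / (2*e) = (1-y)^2/(2*e) - (1 - y) + e/2"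
      using assms by (simp add: field_simps power2_eq_square)
    finally show ?thesis by simp
  qed
  ultimately show ?thesis using assms
  proof (cases "p = 0")
    case False
    then have "p = 1" using assms by auto
    have "0 \<le> (1 - y)^2 / (2*e)" using assms(2) by simp
    then have "1 - e/2 - (1 - y)^2 / (2*e) \<le> 1" using assms(2) by linarith
    then show ?thesis using \<open>p = 1\<close> by simp
  qed simp
qed

lemma lecam:
  fixes Q0 :: "'a measure" and \<psi> :: "'a \<Rightarrow> real" and L :: "nat \<Rightarrow> 'a \<Rightarrow> real"
  assumes Q0: "prob_space Q0"
    and psi: "\<psi> \<in> borel_measurable Q0" "\<forall>x. \<psi> x \<in> {0,1}"
    and K: "K > 0" and e: "e > 0"
    and Lm: "\<And>k. L k \<in> borel_measurable Q0"
    and Lnn: "\<And>k x. 0 \<le> L k x" and Lb: "\<And>k x. L k x \<le> B"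
    and L1: "\<And>k. k < K \<Longrightarrow> (\<integral>x. L k x \<partial>Q0) = 1"
  shows "1 - e/2 - ((\<Sum>k<K. \<Sum>j<K. \<integral>x. L k x * L j x \<partial>Q0) / K^2 - 1) / (2*e)
     \<le> (\<integral>x. \<psi> x \<partial>Q0) + (\<Sum>k<K. \<integral>x. L k x * (1 - \<psi> x) \<partial>Q0) / K"
proof -
  interpret prob_space Q0 by (rule Q0)
  have Bnn: "0 \<le> B"
  proof -
    have "0 \<le> L 0 undefined" by (rule Lnn)
    moreover have "L 0 undefined \<le> B" by (rule Lb)
    ultimately show ?thesis by linarith
  qed
  have bint: "integrable Q0 f" if "f \<in> borel_measurable Q0" "\<And>x. \<bar>f x\<bar> \<le> C" for f :: "'a \<Rightarrow> real" and C
    using that by (intro integrable_const_bound[where B=C]) auto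
  have psib: "\<bar>\<psi> x\<bar> \<le> 1" for x using psi(2)[rule_format, of x] by auto
  have psim[measurable]: "\<psi> \<in> borel_measurable Q0" by (rule psi(1))
  note Lm[measurable]
  have iL: "integrable Q0 (L k)" for k using Lnn Lb Bnn by (intro bint[of _ B]) auto
  have iLL: "integrable Q0 (\<lambda>x. L k x * L j x)" for k j
    using Lnn Lb Bnn by (intro bint[of _ "B*B"]) (auto simp: abs_mult intro!: mult_mono)
  have ipsi: "integrable Q0 \<psi>" using psib by (intro bint[of _ 1]) auto
  have iLpsi: "integrable Q0 (\<lambda>x. L k x * (1 - \<psi> x))" for k
  proof -
    have "\<bar>L k x * (1 - \<psi> x)\<bar> \<le> B" for x
      using psi(2)[rule_format, of x] Lnn[of k x] Lb[of k x] by auto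
    then show ?thesis by (intro bint[of _ B]) auto
  qed
  define Lb' where "Lb' x = (\<Sum>k<K. L k x) / K" for x
  have Lb'nn: "0 \<le> Lb' x" for x unfolding Lb'_def using Lnn by (intro divide_nonneg_nonneg sum_nonneg) auto
  have iLb': "integrable Q0 Lb'" unfolding Lb'_def using iL by auto
  have sqeq: "(\<lambda>x. (Lb' x)^2) = (\<lambda>x. (\<Sum>k<K. \<Sum>j<K. L k x * L j x) / K^2)"
    unfolding Lb'_def by (auto simp: power2_eq_square sum_product power_divide)
  have iLb'2: "integrable Q0 (\<lambda>x. (Lb' x)^2)"
    unfolding sqeq using iLL by (intro integrable_divide integrable_sum) auto
  have intLb': "(\<integral>x. Lb' x \<partial>Q0) = 1"
    unfolding Lb'_def using iL L1 K by (simp add: integral_sum)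
  have intLb'2: "(\<integral>x. (Lb' x)^2 \<partial>Q0) = (\<Sum>k<K. \<Sum>j<K. \<integral>x. L k x * L j x \<partial>Q0) / K^2"
  proof -
    show ?thesis unfolding sqeq using iLL by (simp add: integral_sum)
  qed
  have "(\<integral>x. 1 - e/2 - (1 - Lb' x)^2 / (2*e) \<partial>Q0) \<le> (\<integral>x. \<psi> x + (1 - \<psi> x) * Lb' x \<partial>Q0)"
  proof (rule integral_mono)
    have eq: "(\<lambda>x. 1 - e/2 - (1 - Lb' x)^2 / (2*e)) = (\<lambda>x. (1 - e/2 - 1/(2*e)) + (1/e) * Lb' x - (1/(2*e)) * (Lb' x)^2)"
      using e by (auto simp: field_simps power2_eq_square)
    show "integrable Q0 (\<lambda>x. 1 - e/2 - (1 - Lb' x)^2 / (2*e))"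
      unfolding eq using iLb' iLb'2 by auto
    have eq2: "(\<lambda>x. \<psi> x + (1 - \<psi> x) * Lb' x) = (\<lambda>x. \<psi> x + (\<Sum>k<K. L k x * (1 - \<psi> x)) / K)"
      unfolding Lb'_def sum_distrib_right[symmetric] by (simp add: mult.commute)
    show "integrable Q0 (\<lambda>x. \<psi> x + (1 - \<psi> x) * Lb' x)"
      unfolding eq2 using ipsi iLpsi by auto
    show "1 - e/2 - (1 - Lb' x)^2 / (2*e) \<le> \<psi> x + (1 - \<psi> x) * Lb' x" for x
      by (rule pointwise_lecam[OF psi(2)[rule_format] e Lb'nn])
  qed
  also have "(\<integral>x. \<psi> x + (1 - \<psi> x) * Lb' x \<partial>Q0) = (\<integral>x. \<psi> x \<partial>Q0) + (\<Sum>k<K. \<integral>x. L k x * (1 - \<psi> x) \<partial>Q0) / K"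
  proof -
    have eq2: "(\<lambda>x. \<psi> x + (1 - \<psi> x) * Lb' x) = (\<lambda>x. \<psi> x + (\<Sum>k<K. L k x * (1 - \<psi> x)) / K)"
      unfolding Lb'_def sum_distrib_right[symmetric] by (simp add: mult.commute)
    show ?thesis unfolding eq2 using ipsi iLpsi by (simp add: integral_sum)
  qed
  also have "(\<integral>x. 1 - e/2 - (1 - Lb' x)^2 / (2*e) \<partial>Q0) = 1 - e/2 - ((\<Sum>k<K. \<Sum>j<K. \<integral>x. L k x * L j x \<partial>Q0) / K^2 - 1) / (2*e)"
  proof -
    have eq: "(\<lambda>x. 1 - e/2 - (1 - Lb' x)^2 / (2*e)) = (\<lambda>x. (1 - e/2 - 1/(2*e)) + (1/e) * Lb' x - (1/(2*e)) * (Lb' x)^2)"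
      using e by (auto simp: field_simps power2_eq_square)
    show ?thesis unfolding eq using iLb' iLb'2 e
      by (simp add: intLb' intLb'2 prob_space field_simps)
  qed
  finally show ?thesis .
qed

lemma prod_ifm:
  fixes c :: real
  assumes "m \<le> n"
  shows "(\<Prod>i<n. if i < m then c else 1) = c ^ m"
proof -
  have "(\<Prod>i<n. if i < m then c else 1) = (\<Prod>i\<in>{..<n} \<inter> {i. i < m}. c)"
    by (subst prod.If_cases) auto
  also have "{..<n} \<inter> {i. i < m} = {..<m}" using assms by auto
  finally show ?thesis by simp
qed

lemma QL_intro: "a > 0 \<Longrightarrow> \<forall>i. \<bar>rv i\<bar> \<le> 1 \<Longrightarrow> QL a rv"
  by (simp add: QL_def)

lemma assemble:
  fixes \<sigma> w u \<rho> \<delta> :: real and n K :: nat and t :: "nat \<Rightarrow> nat"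
  assumes \<sigma>: "\<sigma> > 0" and w: "w \<ge> 1 / sqrt (2 * pi)" and u: "u \<ge> 3 / ln 2"
    and n: "n \<ge> 2" and \<rho>: "\<rho> > 0" and \<delta>: "0 < \<delta>" "\<delta> < 1" and K: "K > 0"
    and tk: "\<forall>k<K. 1 \<le> t k \<and> 2 * t k \<le> n \<and> 256 * \<rho> \<le> t k"
    and chi: "(\<Sum>k<K. \<Sum>j<K. (1 + (4/3 * sqrt (\<rho> / t k)) * (4/3 * sqrt (\<rho> / t j)))^(min (t k) (t j))) / K^2 - 1 \<le> \<delta>^2"
  shows "minimax_risk \<rho> n \<sigma> w u \<ge> ennreal (1 - \<delta>)"
proof -
  define a where "a = \<sigma> * sqrt 3"
  have a: "a > 0" using \<sigma> by (simp add: a_def)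
  have a2: "a^2 = 3 * \<sigma>^2" by (simp add: a_def power_mult_distrib)
  define rr where "rr k = 4/3 * sqrt (\<rho> / t k)" for k
  have rr: "0 \<le> rr k \<and> rr k \<le> 1/12" if "k < K" for k
  proof -
    have t: "256 * \<rho> \<le> t k" "1 \<le> t k" using tk that by auto
    have "\<rho> / t k \<le> 1/256" using t \<rho> by (simp add: field_simps)
    then have "sqrt (\<rho> / t k) \<le> sqrt (1/256)" by (rule real_sqrt_le_mono)
    also have "sqrt (1/256) = (1/16::real)" by (simp add: real_sqrt_divide)
    finally show ?thesis using \<rho> unfolding rr_def by auto
  qed
  define rv where "rv k i = (if i < t k then rr k else 0)" for k i
  have rvb: "\<forall>i. 0 \<le> rv k i \<and> rv k i \<le> 1/12" if "k < K" for k
    using rr[OF that] by (auto simp: rv_def)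
  have rvb1: "\<forall>i. \<bar>rv k i\<bar> \<le> 1" if "k < K" for k
  proof
    fix i
    have "0 \<le> rv k i" "rv k i \<le> 1/12" using rvb[OF that] by auto
    then show "\<bar>rv k i\<bar> \<le> 1" by simp
  qed
  define Q0 where "Q0 = QQ n a (\<lambda>_. 0)"
  have n0: "n > 0" using n by simp
  have QL0: "QL a (\<lambda>_. 0)" using a by (simp add: QL_def)
  have QLk: "QL a (rv k)" if "k < K" for k using a rvb1[OF that] by (simp add: QL_def)
  have Q0P: "Q0 \<in> P0_class n w u \<sigma>"
    unfolding P0_class_def Q0_def
  proof (intro CollectI conjI ballI allI impI)
    show "QQ n a (\<lambda>_. 0) \<in> P_class n w u"
      using QL.inP[OF QL0 n0 _ w u] by simp
    fix i j assume "i < n" "j < n"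
    then show "cov_entry (QQ n a (\<lambda>_. 0)) i j = (if i = j then \<sigma>^2 else 0)"
      using QL.cov[OF QL0 n0] a2 by simp
  qed
  have QkP: "QQ n a (rv k) \<in> P1_class n w u \<rho>" if k: "k < K" for k
    unfolding P1_class_def
  proof (intro CollectI conjI)
    show "QQ n a (rv k) \<in> P_class n w u"
      using QL.inP[OF QLk[OF k] n0 rvb[OF k] w u] by simp
    define s1 where "s1 = \<sigma>^2 * (1 + 3/4 * rr k)"
    have rrk: "0 \<le> rr k" "rr k \<le> 1/12" using rr[OF k] by auto
    have tk1: "1 \<le> t k" "2 * t k \<le> n" using tk k by auto
    show "\<exists>t0 s1 s2. 1 \<le> t0 \<and> t0 \<le> n - 1 \<and> s1 > 0 \<and> s2 > 0 \<and>
     (\<forall>i<n. \<forall>j<n. cov_entry (QQ n a (rv k)) i j = (if i = j then (if i < t0 then s1 else s2) else 0)) \<and>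
     (let r = \<bar>s1 - s2\<bar> / min s1 s2 in real (min t0 (n - t0)) * min r (r^2) = \<rho>)"
    proof (intro exI conjI allI impI)
      show "1 \<le> t k" "t k \<le> n - 1" using tk1 by auto
      show "s1 > 0" unfolding s1_def using \<sigma> rrk by (simp add: add_pos_nonneg)
      show "\<sigma>^2 > 0" using \<sigma> by simp
      fix i j assume ij: "i < n" "j < n"
      show "cov_entry (QQ n a (rv k)) i j = (if i = j then (if i < t k then s1 else \<sigma>^2) else 0)"
        using QL.cov[OF QLk[OF k] n0 ij] a2 by (auto simp: rv_def s1_def field_simps)
    next
      have s1: "s1 \<ge> \<sigma>^2" unfolding s1_def using rrk \<sigma> by simp
      have r: "\<bar>s1 - \<sigma>^2\<bar> / min s1 (\<sigma>^2) = sqrt (\<rho> / t k)"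
        using s1 \<sigma> by (simp add: s1_def rr_def min_def field_simps)
      have rt0: "0 \<le> \<rho> / t k" using \<rho> by simp
      have "4/3 * sqrt (\<rho> / t k) \<le> 1/12" using rrk unfolding rr_def by simp
      then have sq1: "sqrt (\<rho> / t k) \<le> 1" by linarith
      have mn: "min (t k) (n - t k) = t k" using tk1 by simp
      have "real (t k) * (sqrt (\<rho> / t k))^2 = \<rho>" using \<rho> tk1 by simp
      moreover have "min (sqrt (\<rho> / t k)) ((sqrt (\<rho> / t k))^2) = (sqrt (\<rho> / t k))^2"
      proof -
        have "sqrt (\<rho> / t k) * sqrt (\<rho> / t k) \<le> sqrt (\<rho> / t k) * 1"
          using sq1 rt0 by (intro mult_left_mono) auto
        then show ?thesis unfolding power2_eq_square by (intro min_absorb2) simp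
      qed
      ultimately show "let r = \<bar>s1 - \<sigma>^2\<bar> / min s1 (\<sigma>^2) in real (min (t k) (n - t k)) * min r (r^2) = \<rho>"
        unfolding r mn Let_def by simp
    qed
  qed
  have probQ0: "prob_space Q0" unfolding Q0_def using QL.prob[OF QL0] .
  have LLcr: "(\<integral>x. LL n a (rv k) x * LL n a (rv j) x \<partial>Q0) = (1 + rr k * rr j)^(min (t k) (t j))"
    if "k < K" "j < K" for k j
  proof -
    have "(\<integral>x. LL n a (rv k) x * LL n a (rv j) x \<partial>Q0) = (\<Prod>i<n. 1 + rv k i * rv j i)"
      unfolding Q0_def by (rule LL_cross(1)[OF a])
    also have "\<dots> = (\<Prod>i<n. if i < min (t k) (t j) then 1 + rr k * rr j else 1)"
      by (intro prod.cong) (auto simp: rv_def)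
    also have "\<dots> = (1 + rr k * rr j)^(min (t k) (t j))"
      using tk that by (intro prod_ifm) auto
    finally show ?thesis .
  qed
  have LL0: "LL n a (\<lambda>_. 0) x = 1" for x by (simp add: LL_def)
  have L1: "(\<integral>x. LL n a (rv k) x \<partial>Q0) = 1" for k
    using LL_cross(1)[OF a, where n=n and rv="rv k" and sv="\<lambda>_. 0"] unfolding Q0_def LL0 by simp
  show ?thesis
    unfolding minimax_risk_def
  proof (rule INF_greatest)
    fix \<psi> assume "\<psi> \<in> tests n"
    then have psim: "\<psi> \<in> borel_measurable (Rn_space n)" and psiv: "\<forall>x. \<psi> x \<in> {0,1}"
      by (auto simp: tests_def)
    have psim0: "\<psi> \<in> borel_measurable Q0"
      unfolding Q0_def using psim by (subst measurable_cong_sets[OF sets_QQ refl])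
    define Lk where "Lk k = LL n a (if k < K then rv k else (\<lambda>_. 0))" for k
    have Lkm: "Lk k \<in> borel_measurable Q0" for k
      unfolding Q0_def Lk_def by (subst measurable_cong_sets[OF sets_QQ refl]) (rule LL_meas)
    have rvK: "\<forall>i. \<bar>(if k < K then rv k else (\<lambda>_. 0)) i\<bar> \<le> 1" for k
      using rvb1 by auto
    have Lknn: "0 \<le> Lk k x" for k x unfolding Lk_def using LL_nonneg[OF rvK] .
    have Lkb: "Lk k x \<le> 2^n" for k x unfolding Lk_def using abs_le_D1[OF LL_bound[OF rvK, where n=n and a=a and x=x]] by simp
    have Lk1: "(\<integral>x. Lk k x \<partial>Q0) = 1" if "k < K" for k using L1 that by (simp add: Lk_def)
    from lecam[OF probQ0 psim0 psiv K \<delta>(1) Lkm Lknn Lkb Lk1]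
    have lc: "1 - \<delta>/2 - ((\<Sum>k<K. \<Sum>j<K. \<integral>x. Lk k x * Lk j x \<partial>Q0) / K^2 - 1) / (2*\<delta>)
       \<le> (\<integral>x. \<psi> x \<partial>Q0) + (\<Sum>k<K. \<integral>x. Lk k x * (1 - \<psi> x) \<partial>Q0) / K" .
    have "(\<Sum>k<K. \<Sum>j<K. \<integral>x. Lk k x * Lk j x \<partial>Q0) =
        (\<Sum>k<K. \<Sum>j<K. (1 + (4/3 * sqrt (\<rho> / t k)) * (4/3 * sqrt (\<rho> / t j)))^(min (t k) (t j)))"
      by (intro sum.cong refl) (simp add: Lk_def LLcr rr_def)
    then have "1 - \<delta> \<le> (\<integral>x. \<psi> x \<partial>Q0) + (\<Sum>k<K. \<integral>x. Lk k x * (1 - \<psi> x) \<partial>Q0) / K"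
    proof -
      assume eq: "(\<Sum>k<K. \<Sum>j<K. \<integral>x. Lk k x * Lk j x \<partial>Q0) =
        (\<Sum>k<K. \<Sum>j<K. (1 + (4/3 * sqrt (\<rho> / t k)) * (4/3 * sqrt (\<rho> / t j)))^(min (t k) (t j)))"
      have "((\<Sum>k<K. \<Sum>j<K. \<integral>x. Lk k x * Lk j x \<partial>Q0) / K^2 - 1) / (2*\<delta>) \<le> \<delta>^2 / (2*\<delta>)"
        unfolding eq using chi \<delta> by (intro divide_right_mono) auto
      also have "\<delta>^2 / (2*\<delta>) = \<delta>/2" using \<delta> by (simp add: power2_eq_square)
      finally show ?thesis using lc by linarith
    qed
    then obtain k where k: "k < K" and
      kge: "1 - \<delta> \<le> (\<integral>x. \<psi> x \<partial>Q0) + (\<integral>x. Lk k x * (1 - \<psi> x) \<partial>Q0)"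
      using avg_le_some[OF K, of "\<lambda>k. \<integral>x. Lk k x * (1 - \<psi> x) \<partial>Q0"] by force
    interpret P0: prob_space Q0 by (rule probQ0)
    have psib: "\<bar>\<psi> x\<bar> \<le> 1" for x using psiv by (auto dest: spec[of _ x])
    have ipsi: "integrable Q0 \<psi>"
      using psib psim0 by (intro P0.integrable_const_bound[where B=1]) auto
    have psinn: "0 \<le> \<psi> x" "0 \<le> 1 - \<psi> x" for x using psiv by (auto dest: spec[of _ x])
    have e0: "(\<integral>\<^sup>+x. ennreal (\<psi> x) \<partial>Q0) = ennreal (\<integral>x. \<psi> x \<partial>Q0)"
      using ipsi psinn by (intro nn_integral_eq_integral) auto
    define Qk where "Qk = QQ n a (rv k)"
    have Qkd: "Qk = density Q0 (\<lambda>x. ennreal (Lk k x))"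
      unfolding Qk_def Q0_def Lk_def using QQ_density[OF a rvb1[OF k]] k by simp
    have psimk: "(\<lambda>x. 1 - \<psi> x) \<in> borel_measurable Q0" using psim0 by measurable
    have "(\<integral>\<^sup>+x. ennreal (1 - \<psi> x) \<partial>Qk) = (\<integral>\<^sup>+x. ennreal (Lk k x) * ennreal (1 - \<psi> x) \<partial>Q0)"
      unfolding Qkd using Lkm psimk by (subst nn_integral_density) auto
    also have "\<dots> = (\<integral>\<^sup>+x. ennreal (Lk k x * (1 - \<psi> x)) \<partial>Q0)"
      using Lknn by (intro nn_integral_cong) (simp add: ennreal_mult')
    also have "\<dots> = ennreal (\<integral>x. Lk k x * (1 - \<psi> x) \<partial>Q0)"
    proof (intro nn_integral_eq_integral)
      have "\<bar>Lk k x * (1 - \<psi> x)\<bar> \<le> 2^n" for x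
        using psiv[rule_format, of x] Lknn[of k x] Lkb[of k x] by auto
      then show "integrable Q0 (\<lambda>x. Lk k x * (1 - \<psi> x))"
        using Lkm psimk by (intro P0.integrable_const_bound[where B="2^n"]) auto
      show "AE x in Q0. 0 \<le> Lk k x * (1 - \<psi> x)" using Lknn psinn by simp
    qed
    finally have e1: "(\<integral>\<^sup>+x. ennreal (1 - \<psi> x) \<partial>Qk) = ennreal (\<integral>x. Lk k x * (1 - \<psi> x) \<partial>Q0)" .
    have i0: "0 \<le> (\<integral>x. \<psi> x \<partial>Q0)" using psinn by simp
    have i1: "0 \<le> (\<integral>x. Lk k x * (1 - \<psi> x) \<partial>Q0)" using psinn Lknn by simp
    have "ennreal (1 - \<delta>) \<le> ennreal ((\<integral>x. \<psi> x \<partial>Q0) + (\<integral>x. Lk k x * (1 - \<psi> x) \<partial>Q0))"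
      using kge by (rule ennreal_leI)
    also have "\<dots> = (\<integral>\<^sup>+x. ennreal (\<psi> x) \<partial>Q0) + (\<integral>\<^sup>+x. ennreal (1 - \<psi> x) \<partial>Qk)"
      unfolding e0 e1 using i0 i1 by (simp add: ennreal_plus)
    also have "\<dots> \<le> (SUP P\<in>P0_class n w u \<sigma>. \<integral>\<^sup>+ x. ennreal (\<psi> x) \<partial>P)
      + (SUP P\<in>P1_class n w u \<rho>. \<integral>\<^sup>+ x. ennreal (1 - \<psi> x) \<partial>P)"
      using Q0P QkP[OF k] unfolding Qk_def by (intro add_mono SUP_upper) auto
    finally show "ennreal (1 - \<delta>) \<le> (SUP P\<in>P0_class n w u \<sigma>. \<integral>\<^sup>+ x. ennreal (\<psi> x) \<partial>P)
      + (SUP P\<in>P1_class n w u \<rho>. \<integral>\<^sup>+ x. ennreal (1 - \<psi> x) \<partial>P)" .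
  qed
qed

lemma pow_exp_bound:
  fixes x :: real assumes "0 \<le> x"
  shows "(1 + x)^m \<le> exp (m * x)"
proof -
  have "(1 + x)^m \<le> (exp x)^m" using assms by (intro power_mono) auto
  also have "\<dots> = exp (m * x)" by (simp add: exp_of_nat_mult)
  finally show ?thesis .
qed

lemma chi_bound:
  fixes K :: nat and t :: "nat \<Rightarrow> nat" and \<rho> \<delta> :: real
  assumes K: "K > 0" and \<rho>: "\<rho> > 0" and \<delta>: "0 < \<delta>" "\<delta> < 1"
    and diag: "\<forall>k<K. exp (min (t k) (t k) * ((4/3 * sqrt (\<rho> / t k)) * (4/3 * sqrt (\<rho> / t k)))) \<le> K * \<delta>^2 / 2"
    and offd: "\<forall>k<K. \<forall>j<K. k \<noteq> j \<longrightarrow> min (t k) (t j) * ((4/3 * sqrt (\<rho> / t k)) * (4/3 * sqrt (\<rho> / t j))) \<le> \<delta>^2 / 4"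
  shows "(\<Sum>k<K. \<Sum>j<K. (1 + (4/3 * sqrt (\<rho> / t k)) * (4/3 * sqrt (\<rho> / t j)))^(min (t k) (t j))) / K^2 - 1 \<le> \<delta>^2"
proof -
  define f where "f k j = (1 + (4/3 * sqrt (\<rho> / t k)) * (4/3 * sqrt (\<rho> / t j)))^(min (t k) (t j))" for k j
  define D where "D = K * \<delta>^2 / 2"
  define Ofd where "Ofd = exp (\<delta>^2 / 4)"
  have Ofd1: "Ofd \<le> 1 + \<delta>^2 / 2"
  proof -
    have "\<delta>^2 \<le> 1" using \<delta> by (simp add: power_le_one)
    then have "exp (\<delta>^2 / 4) \<le> 1 + 2 * (\<delta>^2 / 4)" by (intro real_exp_bound_lemma) auto
    then show ?thesis by (simp add: Ofd_def)
  qed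
  have Ofd0: "0 \<le> Ofd" by (simp add: Ofd_def)
  have fb: "f k j \<le> (if j = k then D else Ofd)" if "k < K" "j < K" for k j
  proof -
    have nn: "0 \<le> (4/3 * sqrt (\<rho> / t k)) * (4/3 * sqrt (\<rho> / t j))" using \<rho> by simp
    have "f k j \<le> exp (min (t k) (t j) * ((4/3 * sqrt (\<rho> / t k)) * (4/3 * sqrt (\<rho> / t j))))"
      unfolding f_def using pow_exp_bound[OF nn, of "min (t k) (t j)"] by simp
    also have "\<dots> \<le> (if j = k then D else Ofd)"
      using diag offd that unfolding D_def Ofd_def by auto
    finally show ?thesis .
  qed
  have "(\<Sum>k<K. \<Sum>j<K. f k j) \<le> (\<Sum>k<K. \<Sum>j<K. (if j = k then D else Ofd))"
    using fb by (intro sum_mono) auto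
  also have "(\<Sum>j<K. (if j = k then D else Ofd)) = D + (real K - 1) * Ofd" if "k < K" for k
  proof -
    have "(\<Sum>j<K. (if j = k then D else Ofd)) = (\<Sum>j\<in>{..<K} \<inter> {j. j = k}. D) + (\<Sum>j\<in>{..<K} \<inter> - {j. j = k}. Ofd)"
      by (rule sum.If_cases) simp
    also have "{..<K} \<inter> {j. j = k} = {k}" using that by auto
    also have "(\<Sum>j\<in>{..<K} \<inter> - {j. j = k}. Ofd) = (real K - 1) * Ofd"
    proof -
      have "{..<K} \<inter> - {j. j = k} = {..<K} - {k}" by auto
      then show ?thesis using that by (simp add: of_nat_diff)
    qed
    finally show ?thesis by simp
  qed
  then have "(\<Sum>k<K. \<Sum>j<K. (if j = k then D else Ofd)) = K * (D + (real K - 1) * Ofd)" by simp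
  finally have S: "(\<Sum>k<K. \<Sum>j<K. f k j) \<le> K * (D + (real K - 1) * Ofd)" .
  have "(\<Sum>k<K. \<Sum>j<K. f k j) / K^2 \<le> K * (D + (real K - 1) * Ofd) / K^2"
    using S by (intro divide_right_mono) auto
  also have "\<dots> = D / K + ((real K - 1) / K) * Ofd" using K by (simp add: power2_eq_square field_simps)
  also have "((real K - 1) / K) * Ofd \<le> 1 * Ofd" using Ofd0 K by (intro mult_right_mono) auto
  then have "D / K + ((real K - 1) / K) * Ofd \<le> D / K + Ofd" by simp
  also have "D / K = \<delta>^2 / 2" using K by (simp add: D_def)
  finally have "(\<Sum>k<K. \<Sum>j<K. f k j) / K^2 \<le> \<delta>^2 / 2 + Ofd" by simp
  then show ?thesis using Ofd1 unfolding f_def by simp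
qed

lemma small_case:
  fixes \<sigma> w u \<rho> \<delta> :: real and n :: nat
  assumes \<sigma>: "\<sigma> > 0" and w: "w \<ge> 1 / sqrt (2 * pi)" and u: "u \<ge> 3 / ln 2"
    and n: "n \<ge> 2" and \<rho>: "\<rho> > 0" and \<delta>: "0 < \<delta>" "\<delta> < 1"
    and small: "\<rho> \<le> \<delta>^2 / 2" "\<rho> \<le> 1/256"
  shows "minimax_risk \<rho> n \<sigma> w u \<ge> ennreal (1 - \<delta>)"
proof -
  define t where "t = (\<lambda>_::nat. 1::nat)"
  have K: "(1::nat) > 0" by simp
  have tk: "\<forall>k<1. 1 \<le> t k \<and> 2 * t k \<le> n \<and> 256 * \<rho> \<le> t k" using n small by (auto simp: t_def)
  have e: "(4/3 * sqrt \<rho>) * (4/3 * sqrt \<rho>) = 16/9 * \<rho>" using \<rho> by (simp add: algebra_simps)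
  have chi: "(\<Sum>k<1. \<Sum>j<1. (1 + (4/3 * sqrt (\<rho> / t k)) * (4/3 * sqrt (\<rho> / t j)))^(min (t k) (t j))) / real ((1::nat)^2) - 1 \<le> \<delta>^2"
    using small e by (simp add: lessThan_Suc t_def)
  show ?thesis by (rule assemble[OF \<sigma> w u n \<rho> \<delta> K tk chi])
qed

lemma offd_gen:
  fixes A B m \<rho> :: real
  assumes "A > 0" "m > 0" "B \<ge> A * m^2" "\<rho> > 0"
  shows "A * (sqrt (\<rho> / A) * sqrt (\<rho> / B)) \<le> \<rho> / m"
proof -
  have B: "B > 0" using assms by (smt (verit) mult_pos_pos zero_less_power)
  have e1: "sqrt (\<rho> / A) * sqrt (\<rho> / B) = \<rho> / sqrt (A * B)"
    using assms B by (simp add: real_sqrt_mult[symmetric] real_sqrt_divide)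
  have am: "A * m \<le> sqrt (A * B)"
  proof -
    have "(A * m)^2 \<le> A * B" using assms
      by (simp add: power_mult_distrib) (metis mult_left_mono less_imp_le power2_eq_square mult.assoc)
    then show ?thesis using assms by (intro real_le_rsqrt) auto
  qed
  have h: "\<rho> / sqrt (A * B) \<le> \<rho> / (A * m)"
    using assms B am by (auto intro!: divide_left_mono mult_pos_pos)
  have "A * (sqrt (\<rho> / A) * sqrt (\<rho> / B)) = A * (\<rho> / sqrt (A * B))" by (simp only: e1)
  also have "\<dots> \<le> A * (\<rho> / (A * m))" by (rule mult_left_mono[OF h]) (use assms in simp)
  also have "\<dots> = \<rho> / m" using assms by simp
  finally show ?thesis .
qed

lemma nat_ceil_le: "0 \<le> x \<Longrightarrow> real (nat \<lceil>x\<rceil>) \<le> x + 1"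
  using ceiling_correct[of x] by linarith

lemma large_case:
  fixes \<sigma> w u \<rho> \<delta> y :: real and n :: nat
  assumes \<sigma>: "\<sigma> > 0" and w: "w \<ge> 1 / sqrt (2 * pi)" and u: "u \<ge> 3 / ln 2"
    and n: "n \<ge> 2" and \<rho>: "\<rho> > 0" and \<delta>: "0 < \<delta>" "\<delta> < 1"
    and y: "y = ln (ln (8 * real n))" and Y: "y \<ge> 2 * ln (144 / \<delta>^4 + 15)"
    and \<rho>y: "\<rho> \<le> y / 8"
  shows "minimax_risk \<rho> n \<sigma> w u \<ge> ennreal (1 - \<delta>)"
proof -
  define M where "M = 1 / \<delta>^4"
  have d4: "\<delta>^4 \<le> 1" "\<delta>^4 > 0" using \<delta> by (auto simp: power_le_one)
  have M1: "M \<ge> 1" unfolding M_def using d4 by simp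
  have Mdd: "1 / \<delta>^2 * (1 / \<delta>^2) = M" unfolding M_def by (simp add: power2_eq_square power4_eq_xxxx)
  have lnpos: "ln (144 * M + 15) > 0" using M1 by simp
  have ypos: "y > 0" using Y lnpos unfolding M_def by simp
  define E where "E = exp (y / 2)"
  have E: "E \<ge> 144 * M + 15"
  proof -
    have "ln (144 * M + 15) \<le> y / 2" using Y unfolding M_def by simp
    then have "exp (ln (144 * M + 15)) \<le> exp (y / 2)" by simp
    then show ?thesis using M1 unfolding E_def by simp
  qed
  have E1: "E \<ge> 1" using E M1 by simp
  have l8: "ln (8 * real n) > 0" using n by simp
  have ey: "exp y = ln (8 * real n)" using y l8 by simp
  have eyE: "exp y = E * E" unfolding E_def by (simp add: exp_add[symmetric])
  have e4: "exp (y/4) * exp (y/4) = E" unfolding E_def by (simp add: exp_add[symmetric])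
  have e41: "exp (y/4) \<ge> 1" using ypos by simp
  have y4: "y \<le> 4 * exp (y/4)" using exp_ge_add_one_self[of "y/4"] by linarith
  define T where "T = nat \<lceil>32 * y\<rceil>"
  define m where "m = nat \<lceil>y / \<delta>^2\<rceil>"
  define K where "K = nat \<lceil>2 * exp (y/4) / \<delta>^2\<rceil>"
  define t where "t k = T * m^(2*k)" for k
  have T1: "32 * y \<le> T" "T \<le> 32 * y + 1" unfolding T_def using ypos
    by (auto simp: real_nat_ceiling_ge nat_ceil_le)
  have m1: "y / \<delta>^2 \<le> m" "m \<le> y / \<delta>^2 + 1" unfolding m_def using ypos
    by (auto simp: real_nat_ceiling_ge nat_ceil_le)
  have K1: "2 * exp (y/4) / \<delta>^2 \<le> K" "K \<le> 2 * exp (y/4) / \<delta>^2 + 1" unfolding K_def using ypos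
    by (auto simp: real_nat_ceiling_ge nat_ceil_le)
  have Tpos: "T > 0" using T1 ypos by linarith
  have mpos: "m > 0" using m1 ypos \<delta> by (smt (verit) divide_pos_pos of_nat_0_less_iff zero_less_power)
  have Kpos: "K > 0" using K1 \<delta> by (smt (verit) divide_pos_pos exp_gt_zero of_nat_0_less_iff zero_less_power)
  have tpos: "t k > 0" for k unfolding t_def using Tpos mpos by simp
  have tmono: "t k \<le> T * m^(2*(K-1))" if "k < K" for k
    unfolding t_def using that mpos by (intro mult_left_mono power_increasing) auto
  have bigX: "real (2 * (T * m^(2*(K-1)))) \<le> real n"
  proof -
    have "ln (real (2 * (T * m^(2*(K-1))))) = ln 2 + ln (real T) + real (2*(K-1)) * ln (real m)"
      using Tpos mpos by (simp add: ln_mult ln_realpow)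
    also have "\<dots> \<le> 1 + 32 * y + 4 * M * y * exp (y/4)"
    proof -
      have "ln 2 \<le> (1::real)" using ln_le_minus_one[of 2] by simp
      moreover have "ln (real T) \<le> 32 * y" using ln_le_minus_one[of "real T"] Tpos T1 by simp
      moreover have "real (2*(K-1)) * ln (real m) \<le> (2 * (2 * exp (y/4) / \<delta>^2)) * (y / \<delta>^2)"
      proof (rule mult_mono)
        show "real (2*(K-1)) \<le> 2 * (2 * exp (y/4) / \<delta>^2)" using K1 Kpos by (simp add: of_nat_diff)
        show "ln (real m) \<le> y / \<delta>^2" using ln_le_minus_one[of "real m"] mpos m1 by simp
        show "0 \<le> 2 * (2 * exp (y/4) / \<delta>^2)" by simp
        show "0 \<le> ln (real m)" using mpos by simp
      qed
      moreover have "(2 * (2 * exp (y/4) / \<delta>^2)) * (y / \<delta>^2) = 4 * y * exp (y/4) * (1 / \<delta>^2 * (1 / \<delta>^2))"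
        by (simp add: field_simps)
      ultimately show ?thesis unfolding Mdd by (simp add: mult_ac)
    qed
    also have "\<dots> \<le> 1 + 36 * M * y * exp (y/4)"
    proof -
      have "y * 1 * 1 \<le> y * M * exp (y/4)" using ypos M1 e41
        by (intro mult_mono) auto
      then show ?thesis by (simp add: mult_ac)
    qed
    also have "\<dots> \<le> 1 + 144 * M * E"
    proof -
      have "36 * M * y * exp (y/4) \<le> 36 * M * (4 * exp (y/4)) * exp (y/4)"
        using y4 M1 by (intro mult_right_mono mult_left_mono) auto
      also have "\<dots> = 144 * M * E" using e4 by (simp add: mult_ac)
      finally show ?thesis by simp
    qed
    also have "\<dots> \<le> E * E - ln 8"
    proof -
      have "ln 8 \<le> (7::real)" using ln_le_minus_one[of 8] by simp
      moreover have "E * (144 * M + 15) \<le> E * E" using E E1 by (intro mult_left_mono) auto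
      moreover have "15 \<le> E * 15" using E1 by simp
      ultimately show ?thesis by (simp add: algebra_simps)
    qed
    also have "\<dots> = ln (real n)" using eyE ey n by (simp add: ln_mult)
    finally have "ln (real (2 * (T * m^(2*(K-1))))) \<le> ln (real n)" .
    then show ?thesis using Tpos mpos n by (subst (asm) ln_le_cancel_iff) auto
  qed
  have tk: "\<forall>k<K. 1 \<le> t k \<and> 2 * t k \<le> n \<and> 256 * \<rho> \<le> t k"
  proof (intro allI impI conjI)
    fix k assume k: "k < K"
    show "1 \<le> t k" using tpos[of k] by simp
    have "2 * t k \<le> 2 * (T * m^(2*(K-1)))" using tmono[OF k] by simp
    also have "\<dots> \<le> n" using bigX by linarith
    finally show "2 * t k \<le> n" .
    have "T \<le> t k" unfolding t_def using mpos by simp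
    then show "256 * \<rho> \<le> t k" using T1 \<rho>y by linarith
  qed
  have offd1: "real (min (t k) (t j)) * ((4/3 * sqrt (\<rho> / t k)) * (4/3 * sqrt (\<rho> / t j))) \<le> \<delta>^2 / 4"
    if kj: "k < j" for k j
  proof -
    have jj: "2*j = 2*k + 2*(j-k)" using kj by simp
    have tj: "t j = t k * m^(2*(j-k))" unfolding t_def
      by (subst jj) (simp add: power_add)
    have mm: "m^2 \<le> m^(2*(j-k))" using mpos kj by (intro power_increasing) auto
    have mn: "min (t k) (t j) = t k" using tj mpos by simp
    have B: "real (t j) \<ge> real (t k) * (real m)^2"
    proof -
      have "t k * m^2 \<le> t k * m^(2*(j-k))" using mm by (rule mult_left_mono) simp
      then have "real (t k * m^2) \<le> real (t k * m^(2*(j-k)))" by (rule of_nat_mono)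
      then show ?thesis unfolding tj by simp
    qed
    have "real (t k) * (sqrt (\<rho> / t k) * sqrt (\<rho> / t j)) \<le> \<rho> / m"
      by (rule offd_gen) (use tpos mpos B \<rho> in auto)
    also have "\<rho> / m \<le> (y / 8) / (y / \<delta>^2)"
      using \<rho>y m1 ypos \<delta> \<rho> by (intro frac_le) auto
    also have "(y / 8) / (y / \<delta>^2) = \<delta>^2 / 8" using ypos by simp
    finally have "real (t k) * (sqrt (\<rho> / t k) * sqrt (\<rho> / t j)) \<le> \<delta>^2 / 8" .
    then have "16/9 * (real (t k) * (sqrt (\<rho> / t k) * sqrt (\<rho> / t j))) \<le> 16/9 * (\<delta>^2 / 8)"
      by (rule mult_left_mono) simp
    also have "\<dots> \<le> \<delta>^2 / 4" by simp
    finally have "16/9 * (real (t k) * (sqrt (\<rho> / t k) * sqrt (\<rho> / t j))) \<le> \<delta>^2 / 4" .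
    moreover have "real (min (t k) (t j)) * ((4/3 * sqrt (\<rho> / t k)) * (4/3 * sqrt (\<rho> / t j)))
       = 16/9 * (real (t k) * (sqrt (\<rho> / t k) * sqrt (\<rho> / t j)))" unfolding mn by simp
    ultimately show ?thesis by metis
  qed
  have chi: "(\<Sum>k<K. \<Sum>j<K. (1 + (4/3 * sqrt (\<rho> / t k)) * (4/3 * sqrt (\<rho> / t j)))^(min (t k) (t j))) / K^2 - 1 \<le> \<delta>^2"
  proof (rule chi_bound[OF Kpos \<rho> \<delta>])
    show "\<forall>k<K. exp (min (t k) (t k) * ((4/3 * sqrt (\<rho> / t k)) * (4/3 * sqrt (\<rho> / t k)))) \<le> K * \<delta>^2 / 2"
    proof (intro allI impI)
      fix k assume "k < K"
      have "min (t k) (t k) * ((4/3 * sqrt (\<rho> / t k)) * (4/3 * sqrt (\<rho> / t k))) = 16/9 * \<rho>"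
        using tpos[of k] \<rho> by simp
      also have "\<dots> \<le> y / 4" using \<rho>y ypos by linarith
      finally have "exp (min (t k) (t k) * ((4/3 * sqrt (\<rho> / t k)) * (4/3 * sqrt (\<rho> / t k)))) \<le> exp (y/4)"
        by simp
      also have "exp (y/4) \<le> K * \<delta>^2 / 2" using K1 \<delta> by (simp add: field_simps)
      finally show "exp (min (t k) (t k) * ((4/3 * sqrt (\<rho> / t k)) * (4/3 * sqrt (\<rho> / t k)))) \<le> K * \<delta>^2 / 2" .
    qed
    show "\<forall>k<K. \<forall>j<K. k \<noteq> j \<longrightarrow> min (t k) (t j) * ((4/3 * sqrt (\<rho> / t k)) * (4/3 * sqrt (\<rho> / t j))) \<le> \<delta>^2 / 4"
    proof (intro allI impI)
      fix k j assume "k < K" "j < K" "k \<noteq> j"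
      then consider "k < j" | "j < k" by linarith
      then show "min (t k) (t j) * ((4/3 * sqrt (\<rho> / t k)) * (4/3 * sqrt (\<rho> / t j))) \<le> \<delta>^2 / 4"
      proof cases
        case 1 then show ?thesis using offd1 by simp
      next
        case 2 then show ?thesis using offd1[OF 2] by (simp add: min.commute mult.commute)
      qed
    qed
  qed
  show ?thesis by (rule assemble[OF \<sigma> w u n \<rho> \<delta> Kpos tk chi])
qed

theorem proposition2:
  shows "\<exists>u0>0. \<forall>\<delta>::real. 0 < \<delta> \<and> \<delta> < 1 \<longrightarrow>
    (\<exists>c\<delta>>0. \<forall>\<sigma> w u c \<rho>::real. \<forall>n::nat.
       \<sigma> > 0 \<longrightarrow> w \<ge> 1 / sqrt (2 * pi) \<longrightarrow> u \<ge> u0 \<longrightarrow> n \<ge> 2 \<longrightarrow>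
       0 < c \<longrightarrow> c < c\<delta> \<longrightarrow> 0 < \<rho> \<longrightarrow> \<rho> \<le> c * ln (ln (8 * real n)) \<longrightarrow>
       minimax_risk \<rho> n \<sigma> w u \<ge> ennreal (1 - \<delta>))"
proof (rule exI[of _ "3 / ln 2"], intro conjI allI impI)
  show "(0::real) < 3 / ln 2" by simp
  fix \<delta> :: real assume \<delta>: "0 < \<delta> \<and> \<delta> < 1"
  define Y0 where "Y0 = 2 * ln (144 / \<delta>^4 + 15)"
  have "144 / \<delta>^4 + 15 > 1" using \<delta> by (simp add: add_pos_nonneg add_strict_increasing)
  then have Y0: "Y0 > 0" unfolding Y0_def by simp
  define cd where "cd = min (1/8) (min (\<delta>^2/2) (1/256) / Y0)"
  show "\<exists>c\<delta>>0. \<forall>\<sigma> w u c \<rho>::real. \<forall>n::nat.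
       \<sigma> > 0 \<longrightarrow> w \<ge> 1 / sqrt (2 * pi) \<longrightarrow> u \<ge> 3 / ln 2 \<longrightarrow> n \<ge> 2 \<longrightarrow>
       0 < c \<longrightarrow> c < c\<delta> \<longrightarrow> 0 < \<rho> \<longrightarrow> \<rho> \<le> c * ln (ln (8 * real n)) \<longrightarrow>
       minimax_risk \<rho> n \<sigma> w u \<ge> ennreal (1 - \<delta>)"
  proof (rule exI[of _ cd], intro conjI allI impI)
    show "cd > 0" unfolding cd_def using Y0 \<delta> by simp
    fix \<sigma> w u c \<rho> :: real and n :: nat
    assume \<sigma>: "\<sigma> > 0" and w: "w \<ge> 1 / sqrt (2 * pi)" and u: "u \<ge> 3 / ln 2" and n: "n \<ge> 2"
      and c: "0 < c" "c < cd" and \<rho>: "0 < \<rho>" and \<rho>c: "\<rho> \<le> c * ln (ln (8 * real n))"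
    define y where "y = ln (ln (8 * real n))"
    have ypos: "y > 0"
    proof (rule ccontr)
      assume "\<not> y > 0"
      then have "c * y \<le> 0" using c by (simp add: mult_nonneg_nonpos)
      then show False using \<rho> \<rho>c unfolding y_def by simp
    qed
    have \<rho>cy: "\<rho> \<le> c * y" using \<rho>c unfolding y_def .
    show "minimax_risk \<rho> n \<sigma> w u \<ge> ennreal (1 - \<delta>)"
    proof (cases "y \<ge> Y0")
      case True
      have "c * y \<le> (1/8) * y" using c ypos unfolding cd_def by (intro mult_right_mono) auto
      then have "\<rho> \<le> y / 8" using \<rho>cy by simp
      then show ?thesis
        using large_case[OF \<sigma> w u n \<rho> _ _ y_def] True \<delta> unfolding Y0_def by auto
    next
      case False
      have "c * y \<le> cd * Y0" using c ypos False by (intro mult_mono) auto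
      also have "cd * Y0 \<le> (min (\<delta>^2/2) (1/256) / Y0) * Y0"
        unfolding cd_def using Y0 by (intro mult_right_mono) auto
      also have "\<dots> = min (\<delta>^2/2) (1/256)" using Y0 by simp
      finally have "\<rho> \<le> min (\<delta>^2/2) (1/256)" using \<rho>cy by linarith
      then show ?thesis using small_case[OF \<sigma> w u n \<rho>] \<delta> by auto
    qed
  qed
qed

end
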